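(* Neither $\mathsf{Slice}$ nor $\mathsf{Space}$ is a monoidal category under a monoidal product given on objects by $X\otimes Y:=X\cap Y$ and on morphisms by $S\otimes T:=S\cap T$.
   Context: Fix a connected, time-orientable Lorentzian manifold $\mathcal{M}$ with a fixed time-orientation (no further causality assumptions). A causal curve is an equivalence class, up to monotone reparametrisation, of smooth regular paths $\mu:\iota\to\mathcal{M}$ ($\iota\subseteq\mathbb{R}$ an interval) whose tangent is everywhere timelike or null; it is future-directed if the tangent is everywhere future-directed. Write $x\prec y$ if $x=y$ or there is a future-directed causal curve from $x$ to $y$. A region is any subset of $\mathcal{M}$; a region $A$ is spacelike if no two distinct points $x,y\in A$ satisfy $x\prec y$. A slice is a closed spacelike subset of $\mathcal{M}$. For regions $A,B$, $\mathcal{C}[A,B]$ is the set of future-directed causal curves passing through $A$ and then $B$: for a representative path $\mu:\iota\to\mathcal{M}$, there exists $q\in\iota$ with $\mu(q)\in B$, and for every such $q$ there exists $p\le q$ with $\mu(p)\in A$. The category $\mathsf{Slice}$ has slices as objects, $\mathsf{Slice}(X,Y)=\mathcal{P}(\mathcal{C}[X,Y])$ (the powerset), composition $T\circ S:=T\cap S$, identities $1_X=\mathcal{C}[X,X]$. The category $\mathsf{Space}$ is defined identically but with arbitrary regions as objects. *)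

theory Defs
  imports "HOL-Analysis.Analysis"
begin

text \<open>C^k on a set S, using derivatives within S (so that closed intervals are
allowed as domains of paths); C^(k+1) means differentiable with C^k partial
derivatives (directional derivatives along the standard basis).\<close>

fun Ck :: "nat \<Rightarrow> 'a::euclidean_space set \<Rightarrow> ('a \<Rightarrow> 'b::euclidean_space) \<Rightarrow> bool" where
  "Ck 0 S f = continuous_on S f"
| "Ck (Suc k) S f =
     ((\<forall>x\<in>S. f differentiable (at x within S)) \<and>
      (\<forall>i\<in>Basis. Ck k S (\<lambda>x. frechet_derivative f (at x within S) i)))"

definition smooth_on :: "'a::euclidean_space set \<Rightarrow> ('a \<Rightarrow> 'b::euclidean_space) \<Rightarrow> bool" where
  "smooth_on S f \<longleftrightarrow> (\<forall>k. Ck k S f)"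

text \<open>The manifold is the whole of a Hausdorff, second countable topological type 'p;
it carries a smooth atlas of charts (U, phi) with values in real^'n.  The metric is
given by its component matrix G phi x in each chart (phi, U) at each x in U, the
time orientation by the components Tf phi x of a continuous timelike vector field.\<close>

type_synonym ('p, 'n) chart = "'p set \<times> ('p \<Rightarrow> real^'n)"

definition bil :: "real^'n^'n \<Rightarrow> real^'n \<Rightarrow> real^'n \<Rightarrow> real" where
  "bil A v w = v \<bullet> (A *v w)"

definition lorentz_signature :: "real^'n^'n \<Rightarrow> bool" where
  "lorentz_signature A \<longleftrightarrow> transpose A = A \<and>
     (\<exists>(P::real^'n^'n) (i0::'n). invertible P \<and>
        transpose P ** A ** P = (\<chi> i j. if i = j then (if i = i0 then -1 else 1) else 0))"

definition transition :: "('p, 'n) chart \<Rightarrow> ('p, 'n) chart \<Rightarrow> real^'n \<Rightarrow> real^'n" where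
  "transition c d = snd d \<circ> inv_into (fst c) (snd c)"

definition smooth_atlas :: "('p::topological_space, 'n::finite) chart set \<Rightarrow> bool" where
  "smooth_atlas A \<longleftrightarrow>
     (\<Union>c\<in>A. fst c) = UNIV \<and>
     (\<forall>(U, \<phi>)\<in>A. open U \<and> open (\<phi> ` U) \<and> homeomorphism U (\<phi> ` U) \<phi> (inv_into U \<phi>)) \<and>
     (\<forall>c\<in>A. \<forall>d\<in>A. smooth_on (snd c ` (fst c \<inter> fst d)) (transition c d))"

definition lorentzian_manifold ::
  "('p::{t2_space, second_countable_topology}, 'n::finite) chart set \<Rightarrow>
   (('p \<Rightarrow> real^'n) \<Rightarrow> 'p \<Rightarrow> real^'n^'n) \<Rightarrow> (('p \<Rightarrow> real^'n) \<Rightarrow> 'p \<Rightarrow> real^'n) \<Rightarrow> bool" where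
  "lorentzian_manifold A G Tf \<longleftrightarrow>
     connected (UNIV :: 'p set) \<and> smooth_atlas A \<and>
     (\<forall>(U, \<phi>)\<in>A.
        smooth_on (\<phi> ` U) (\<lambda>y. G \<phi> (inv_into U \<phi> y)) \<and>
        continuous_on (\<phi> ` U) (\<lambda>y. Tf \<phi> (inv_into U \<phi> y)) \<and>
        (\<forall>x\<in>U. lorentz_signature (G \<phi> x) \<and> bil (G \<phi> x) (Tf \<phi> x) (Tf \<phi> x) < 0)) \<and>
     (\<forall>c\<in>A. \<forall>d\<in>A. \<forall>x\<in>fst c \<inter> fst d.
        (let J = frechet_derivative (transition c d) (at (snd c x)) in
          (\<forall>v w. bil (G (snd c) x) v w = bil (G (snd d) x) (J v) (J w)) \<and>
          Tf (snd d) x = J (Tf (snd c) x)))"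

text \<open>A smooth regular future-directed causal path mu on an interval I (with more than
one point): near every parameter t, in some chart of the atlas, the coordinate expression
is smooth, and its velocity v is nonzero, causal (g(v,v) \<le> 0) and future-directed
(g(v,T) < 0 for the time-orientation field T).\<close>

definition fdc_path ::
  "('p::topological_space, 'n::finite) chart set \<Rightarrow>
   (('p \<Rightarrow> real^'n) \<Rightarrow> 'p \<Rightarrow> real^'n^'n) \<Rightarrow> (('p \<Rightarrow> real^'n) \<Rightarrow> 'p \<Rightarrow> real^'n) \<Rightarrow>
   real set \<Rightarrow> (real \<Rightarrow> 'p) \<Rightarrow> bool" where
  "fdc_path A G Tf I \<mu> \<longleftrightarrow>
     is_interval I \<and> (\<exists>a\<in>I. \<exists>b\<in>I. a < b) \<and>
     (\<forall>t\<in>I. \<exists>(U, \<phi>)\<in>A. \<exists>e>0.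
        \<mu> ` (I \<inter> {t - e<..<t + e}) \<subseteq> U \<and>
        smooth_on (I \<inter> {t - e<..<t + e}) (\<phi> \<circ> \<mu>) \<and>
        (let v = vector_derivative (\<phi> \<circ> \<mu>) (at t within I) in
           v \<noteq> 0 \<and> bil (G \<phi> (\<mu> t)) v v \<le> 0 \<and> bil (G \<phi> (\<mu> t)) v (Tf \<phi> (\<mu> t)) < 0))"

definition reparam :: "real set \<Rightarrow> (real \<Rightarrow> 'p) \<Rightarrow> real set \<Rightarrow> (real \<Rightarrow> 'p) \<Rightarrow> bool" where
  "reparam I \<mu> K \<nu> \<longleftrightarrow> is_interval K \<and>
     (\<exists>h. bij_betw h K I \<and> smooth_on K h \<and>
          (\<forall>s\<in>K. \<exists>d>0. (h has_real_derivative d) (at s within K)) \<and>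
          (\<forall>s\<in>K. \<nu> s = \<mu> (h s)))"

text \<open>Future-directed causal curves: equivalence classes of such paths.\<close>

definition fdc_curves ::
  "('p::topological_space, 'n::finite) chart set \<Rightarrow>
   (('p \<Rightarrow> real^'n) \<Rightarrow> 'p \<Rightarrow> real^'n^'n) \<Rightarrow> (('p \<Rightarrow> real^'n) \<Rightarrow> 'p \<Rightarrow> real^'n) \<Rightarrow>
   (real set \<times> (real \<Rightarrow> 'p)) set set" where
  "fdc_curves A G Tf =
     {c. \<exists>I \<mu>. fdc_path A G Tf I \<mu> \<and> c = {(K, \<nu>). reparam I \<mu> K \<nu>}}"

definition causal_prec ::
  "('p::topological_space, 'n::finite) chart set \<Rightarrow>
   (('p \<Rightarrow> real^'n) \<Rightarrow> 'p \<Rightarrow> real^'n^'n) \<Rightarrow> (('p \<Rightarrow> real^'n) \<Rightarrow> 'p \<Rightarrow> real^'n) \<Rightarrow>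
   'p \<Rightarrow> 'p \<Rightarrow> bool" where
  "causal_prec A G Tf x y \<longleftrightarrow> x = y \<or>
     (\<exists>I \<mu> a b. fdc_path A G Tf I \<mu> \<and> a \<in> I \<and> b \<in> I \<and> a \<le> b \<and> \<mu> a = x \<and> \<mu> b = y)"

definition spacelike ::
  "('p::topological_space, 'n::finite) chart set \<Rightarrow>
   (('p \<Rightarrow> real^'n) \<Rightarrow> 'p \<Rightarrow> real^'n^'n) \<Rightarrow> (('p \<Rightarrow> real^'n) \<Rightarrow> 'p \<Rightarrow> real^'n) \<Rightarrow>
   'p set \<Rightarrow> bool" where
  "spacelike A G Tf R \<longleftrightarrow> (\<forall>x\<in>R. \<forall>y\<in>R. x \<noteq> y \<longrightarrow> \<not> causal_prec A G Tf x y)"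

definition is_slice ::
  "('p::topological_space, 'n::finite) chart set \<Rightarrow>
   (('p \<Rightarrow> real^'n) \<Rightarrow> 'p \<Rightarrow> real^'n^'n) \<Rightarrow> (('p \<Rightarrow> real^'n) \<Rightarrow> 'p \<Rightarrow> real^'n) \<Rightarrow>
   'p set \<Rightarrow> bool" where
  "is_slice A G Tf R \<longleftrightarrow> closed R \<and> spacelike A G Tf R"

text \<open>C[X,Y]: future-directed causal curves passing through X and then Y.\<close>

definition curves_through ::
  "('p::topological_space, 'n::finite) chart set \<Rightarrow>
   (('p \<Rightarrow> real^'n) \<Rightarrow> 'p \<Rightarrow> real^'n^'n) \<Rightarrow> (('p \<Rightarrow> real^'n) \<Rightarrow> 'p \<Rightarrow> real^'n) \<Rightarrow>
   'p set \<Rightarrow> 'p set \<Rightarrow> (real set \<times> (real \<Rightarrow> 'p)) set set" where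
  "curves_through A G Tf X Y =
     {c \<in> fdc_curves A G Tf. \<exists>(I, \<mu>)\<in>c.
        (\<exists>q\<in>I. \<mu> q \<in> Y) \<and> (\<forall>q\<in>I. \<mu> q \<in> Y \<longrightarrow> (\<exists>p\<in>I. p \<le> q \<and> \<mu> p \<in> X))}"

text \<open>A category is given by a set of objects Ob, hom-sets Hom X Y, composition
cmp g f (g after f) and identities ident X.\<close>

definition category :: "'o set \<Rightarrow> ('o \<Rightarrow> 'o \<Rightarrow> 'm set) \<Rightarrow> ('m \<Rightarrow> 'm \<Rightarrow> 'm) \<Rightarrow> ('o \<Rightarrow> 'm) \<Rightarrow> bool" where
  "category Ob Hom cmp ident \<longleftrightarrow>
     (\<forall>X\<in>Ob. ident X \<in> Hom X X) \<and>
     (\<forall>X\<in>Ob. \<forall>Y\<in>Ob. \<forall>Z\<in>Ob. \<forall>f\<in>Hom X Y. \<forall>g\<in>Hom Y Z. cmp g f \<in> Hom X Z) \<and>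
     (\<forall>X\<in>Ob. \<forall>Y\<in>Ob. \<forall>f\<in>Hom X Y. cmp f (ident X) = f \<and> cmp (ident Y) f = f) \<and>
     (\<forall>W\<in>Ob. \<forall>X\<in>Ob. \<forall>Y\<in>Ob. \<forall>Z\<in>Ob. \<forall>f\<in>Hom W X. \<forall>g\<in>Hom X Y. \<forall>h\<in>Hom Y Z.
        cmp h (cmp g f) = cmp (cmp h g) f)"

definition is_iso :: "('o \<Rightarrow> 'o \<Rightarrow> 'm set) \<Rightarrow> ('m \<Rightarrow> 'm \<Rightarrow> 'm) \<Rightarrow> ('o \<Rightarrow> 'm) \<Rightarrow> 'o \<Rightarrow> 'o \<Rightarrow> 'm \<Rightarrow> bool" where
  "is_iso Hom cmp ident X Y f \<longleftrightarrow>
     f \<in> Hom X Y \<and> (\<exists>g\<in>Hom Y X. cmp g f = ident X \<and> cmp f g = ident Y)"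

definition monoidal_category ::
  "'o set \<Rightarrow> ('o \<Rightarrow> 'o \<Rightarrow> 'm set) \<Rightarrow> ('m \<Rightarrow> 'm \<Rightarrow> 'm) \<Rightarrow> ('o \<Rightarrow> 'm) \<Rightarrow>
   ('o \<Rightarrow> 'o \<Rightarrow> 'o) \<Rightarrow> ('m \<Rightarrow> 'm \<Rightarrow> 'm) \<Rightarrow> 'o \<Rightarrow>
   ('o \<Rightarrow> 'o \<Rightarrow> 'o \<Rightarrow> 'm) \<Rightarrow> ('o \<Rightarrow> 'm) \<Rightarrow> ('o \<Rightarrow> 'm) \<Rightarrow> bool" where
  "monoidal_category Ob Hom cmp ident tO tM I a l r \<longleftrightarrow>
     category Ob Hom cmp ident \<and>
     \<comment> \<open>tensor is a bifunctor\<close>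
     (\<forall>X\<in>Ob. \<forall>Y\<in>Ob. tO X Y \<in> Ob) \<and>
     (\<forall>X\<in>Ob. \<forall>Y\<in>Ob. \<forall>X'\<in>Ob. \<forall>Y'\<in>Ob. \<forall>f\<in>Hom X Y. \<forall>g\<in>Hom X' Y'.
        tM f g \<in> Hom (tO X X') (tO Y Y')) \<and>
     (\<forall>X\<in>Ob. \<forall>Y\<in>Ob. tM (ident X) (ident Y) = ident (tO X Y)) \<and>
     (\<forall>X\<in>Ob. \<forall>Y\<in>Ob. \<forall>Z\<in>Ob. \<forall>X'\<in>Ob. \<forall>Y'\<in>Ob. \<forall>Z'\<in>Ob.
        \<forall>f\<in>Hom X Y. \<forall>g\<in>Hom Y Z. \<forall>f'\<in>Hom X' Y'. \<forall>g'\<in>Hom Y' Z'.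
        tM (cmp g f) (cmp g' f') = cmp (tM g g') (tM f f')) \<and>
     \<comment> \<open>unit and structural isomorphisms\<close>
     I \<in> Ob \<and>
     (\<forall>X\<in>Ob. \<forall>Y\<in>Ob. \<forall>Z\<in>Ob. is_iso Hom cmp ident (tO (tO X Y) Z) (tO X (tO Y Z)) (a X Y Z)) \<and>
     (\<forall>X\<in>Ob. is_iso Hom cmp ident (tO I X) X (l X)) \<and>
     (\<forall>X\<in>Ob. is_iso Hom cmp ident (tO X I) X (r X)) \<and>
     \<comment> \<open>naturality\<close>
     (\<forall>X\<in>Ob. \<forall>Y\<in>Ob. \<forall>Z\<in>Ob. \<forall>X'\<in>Ob. \<forall>Y'\<in>Ob. \<forall>Z'\<in>Ob.
        \<forall>f\<in>Hom X X'. \<forall>g\<in>Hom Y Y'. \<forall>h\<in>Hom Z Z'.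
        cmp (a X' Y' Z') (tM (tM f g) h) = cmp (tM f (tM g h)) (a X Y Z)) \<and>
     (\<forall>X\<in>Ob. \<forall>Y\<in>Ob. \<forall>f\<in>Hom X Y. cmp (l Y) (tM (ident I) f) = cmp f (l X)) \<and>
     (\<forall>X\<in>Ob. \<forall>Y\<in>Ob. \<forall>f\<in>Hom X Y. cmp (r Y) (tM f (ident I)) = cmp f (r X)) \<and>
     \<comment> \<open>pentagon and triangle\<close>
     (\<forall>W\<in>Ob. \<forall>X\<in>Ob. \<forall>Y\<in>Ob. \<forall>Z\<in>Ob.
        cmp (tM (ident W) (a X Y Z)) (cmp (a W (tO X Y) Z) (tM (a W X Y) (ident Z)))
        = cmp (a W X (tO Y Z)) (a (tO W X) Y Z)) \<and>
     (\<forall>X\<in>Ob. \<forall>Y\<in>Ob.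
        cmp (tM (ident X) (l Y)) (a X I Y) = tM (r X) (ident Y))"

definition cHom ::
  "('p::topological_space, 'n::finite) chart set \<Rightarrow>
   (('p \<Rightarrow> real^'n) \<Rightarrow> 'p \<Rightarrow> real^'n^'n) \<Rightarrow> (('p \<Rightarrow> real^'n) \<Rightarrow> 'p \<Rightarrow> real^'n) \<Rightarrow>
   'p set \<Rightarrow> 'p set \<Rightarrow> (real set \<times> (real \<Rightarrow> 'p)) set set set" where
  "cHom A G Tf X Y = Pow (curves_through A G Tf X Y)"

definition cComp :: "'c set \<Rightarrow> 'c set \<Rightarrow> 'c set" where
  "cComp T S = T \<inter> S"

definition cId ::
  "('p::topological_space, 'n::finite) chart set \<Rightarrow>
   (('p \<Rightarrow> real^'n) \<Rightarrow> 'p \<Rightarrow> real^'n^'n) \<Rightarrow> (('p \<Rightarrow> real^'n) \<Rightarrow> 'p \<Rightarrow> real^'n) \<Rightarrow>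
   'p set \<Rightarrow> (real set \<times> (real \<Rightarrow> 'p)) set set" where
  "cId A G Tf X = curves_through A G Tf X X"

definition slice_objects ::
  "('p::topological_space, 'n::finite) chart set \<Rightarrow>
   (('p \<Rightarrow> real^'n) \<Rightarrow> 'p \<Rightarrow> real^'n^'n) \<Rightarrow> (('p \<Rightarrow> real^'n) \<Rightarrow> 'p \<Rightarrow> real^'n) \<Rightarrow> 'p set set" where
  "slice_objects A G Tf = {X. is_slice A G Tf X}"

end

theory Submission
  imports Defs
begin

lemma bil_cont:
  fixes M :: "'a::topological_space \<Rightarrow> real^'n^'n"
  assumes "continuous_on S M" "continuous_on S w"
  shows "continuous_on S (\<lambda>y. bil (M y) v (w y))"
  unfolding bil_def inner_vec_def matrix_vector_mult_def
  using assms by (auto intro!: continuous_intros)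

lemma Ck_cong: "(\<And>x. x \<in> S \<Longrightarrow> f x = g x) \<Longrightarrow> Ck k S f = Ck k S g"
proof (induction k arbitrary: f g)
  case 0
  then show ?case using continuous_on_cong[OF refl] by simp
next
  case (Suc k)
  have hd: "(f has_derivative D) (at x within S) \<longleftrightarrow> (g has_derivative D) (at x within S)"
    if "x \<in> S" for x D
    using that Suc.prems has_derivative_transform_within[of _ _ x S 1] by (metis zero_less_one)
  have fd: "frechet_derivative f (at x within S) = frechet_derivative g (at x within S)"
    if "x \<in> S" for x
    unfolding frechet_derivative_def using hd[OF that] by simp
  have dd: "f differentiable (at x within S) \<longleftrightarrow> g differentiable (at x within S)"
    if "x \<in> S" for x
    unfolding differentiable_def using hd[OF that] by simp
  have "\<forall>i. Ck k S (\<lambda>x. frechet_derivative f (at x within S) i) = Ck k S (\<lambda>x. frechet_derivative g (at x within S) i)"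
    by (intro allI Suc.IH) (simp add: fd)
  then show ?case using dd by auto
qed

lemma Ck_const: "open S \<Longrightarrow> Ck k S (\<lambda>_. c)"
proof (induction k arbitrary: c)
  case 0
  then show ?case by simp
next
  case (Suc k)
  have fd: "frechet_derivative (\<lambda>_. c) (at x within S) = (\<lambda>_. 0)" if "x \<in> S" for x
    using at_within_open[OF that Suc.prems] frechet_derivative_at[OF has_derivative_const[of c "at x"]]
    by simp
  have "Ck k S (\<lambda>x. frechet_derivative (\<lambda>_. c) (at x within S) i)" for i
    using Ck_cong[of S "\<lambda>x. frechet_derivative (\<lambda>_. c) (at x within S) i" "\<lambda>_. 0" k] fd Suc.IH Suc.prems
    by simp
  then show ?case by simp
qed

lemma Ck_affine:
  fixes p v :: "'b::euclidean_space"
  assumes "open S"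
  shows "Ck k S (\<lambda>s::real. p + s *\<^sub>R v)"
proof (cases k)
  case 0
  then show ?thesis by (simp add: continuous_intros)
next
  case (Suc k')
  have hd: "((\<lambda>s::real. p + s *\<^sub>R v) has_derivative (\<lambda>h. h *\<^sub>R v)) (at x)" for x
    by (auto intro!: derivative_eq_intros)
  have fd: "frechet_derivative (\<lambda>s::real. p + s *\<^sub>R v) (at x within S) = (\<lambda>h. h *\<^sub>R v)" if "x \<in> S" for x
    using at_within_open[OF that assms] frechet_derivative_at[OF hd[of x]] by simp
  have "Ck k' S (\<lambda>x. frechet_derivative (\<lambda>s::real. p + s *\<^sub>R v) (at x within S) i)" for i
    using Ck_cong[of S "\<lambda>x. frechet_derivative (\<lambda>s::real. p + s *\<^sub>R v) (at x within S) i" "\<lambda>_. i *\<^sub>R v" k'] fd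
      Ck_const[OF assms]
    by simp
  moreover have "\<forall>x\<in>S. (\<lambda>s::real. p + s *\<^sub>R v) differentiable (at x within S)"
    using hd by (meson differentiable_at_withinI differentiable_def)
  ultimately show ?thesis using Suc by simp
qed

lemma smooth_affine:
  fixes p v :: "'b::euclidean_space"
  assumes "open S" "\<And>s. s \<in> S \<Longrightarrow> f s = p + s *\<^sub>R v"
  shows "smooth_on S f"
  unfolding smooth_on_def using Ck_cong[of S f "\<lambda>s. p + s *\<^sub>R v"] assms Ck_affine by metis

lemma exists_path:
  fixes A :: "('p::{t2_space, second_countable_topology}, 'n::finite) chart set"
  assumes M: "lorentzian_manifold A G Tf"
  shows "\<exists>I \<mu> a b. open I \<and> fdc_path A G Tf I \<mu> \<and> a \<in> I \<and> b \<in> I \<and> \<mu> a \<noteq> \<mu> b"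
proof -
  have atl: "smooth_atlas A" using M unfolding lorentzian_manifold_def by simp
  obtain U \<phi> where UA: "(U, \<phi>) \<in> A" and x0U: "x0 \<in> U"
    proof -
    have "x0 \<in> (\<Union>c\<in>A. fst c)" using atl unfolding smooth_atlas_def by simp
    then obtain c where "c \<in> A" "x0 \<in> fst c" by blast
    thus ?thesis using that[of "fst c" "snd c"] by simp
  qed
  have opU: "open (\<phi> ` U)" and hom: "homeomorphism U (\<phi> ` U) \<phi> (inv_into U \<phi>)"
    using atl UA unfolding smooth_atlas_def by auto
  define \<psi> where "\<psi> = inv_into U \<phi>"
  have psi0: "\<psi> (\<phi> x0) = x0" using hom x0U unfolding \<psi>_def homeomorphism_def by blast
  have chart: "smooth_on (\<phi> ` U) (\<lambda>y. G \<phi> (\<psi> y))" "continuous_on (\<phi> ` U) (\<lambda>y. Tf \<phi> (\<psi> y))"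
    "\<forall>x\<in>U. lorentz_signature (G \<phi> x) \<and> bil (G \<phi> x) (Tf \<phi> x) (Tf \<phi> x) < 0"
    using M UA unfolding lorentzian_manifold_def \<psi>_def by auto
  have gc: "continuous_on (\<phi> ` U) (\<lambda>y. G \<phi> (\<psi> y))"
    using chart(1) unfolding smooth_on_def by (metis Ck.simps(1))
  define p where "p = \<phi> x0"
  define v where "v = Tf \<phi> x0"
  have neg: "bil (G \<phi> x0) v v < 0" using chart(3) x0U v_def by auto
  have vnz: "v \<noteq> 0" using neg by (auto simp: bil_def)
  define F where "F y = bil (G \<phi> (\<psi> y)) v v" for y
  define H where "H y = bil (G \<phi> (\<psi> y)) v (Tf \<phi> (\<psi> y))" for y
  have Fc: "continuous_on (\<phi> ` U) F" unfolding F_def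
    by (rule bil_cont[OF gc]) (rule continuous_on_const)
  have Hc: "continuous_on (\<phi> ` U) H" unfolding H_def
    by (rule bil_cont[OF gc chart(2)])
  define W where "W = (F -` {..<0} \<inter> \<phi> ` U) \<inter> (H -` {..<0} \<inter> \<phi> ` U)"
  have "open W" unfolding W_def
    using Fc Hc continuous_on_open_vimage[OF opU] open_lessThan by (metis open_Int)
  moreover have "p \<in> W" unfolding W_def F_def H_def p_def using psi0 neg x0U v_def by auto
  ultimately obtain r where r: "r > 0" "ball p r \<subseteq> W" using openE by blast
  define e where "e = r / norm v"
  have e: "e > 0" using r vnz by (simp add: e_def)
  define I where "I = {-e<..<e}"
  define \<mu> where "\<mu> t = \<psi> (p + t *\<^sub>R v)" for t
  have inW: "p + t *\<^sub>R v \<in> W" if "t \<in> I" for t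
  proof -
    have "\<bar>t\<bar> < e" using that by (auto simp: I_def)
    hence "\<bar>t\<bar> * norm v < r" using vnz by (simp add: e_def pos_less_divide_eq)
    hence "p + t *\<^sub>R v \<in> ball p r" by (simp add: dist_norm)
    thus ?thesis using r by auto
  qed
  have inU: "p + t *\<^sub>R v \<in> \<phi> ` U" if "t \<in> I" for t using inW[OF that] by (auto simp: W_def)
  have phimu: "(\<phi> \<circ> \<mu>) t = p + t *\<^sub>R v" if "t \<in> I" for t
    using inU[OF that] by (simp add: \<mu>_def \<psi>_def f_inv_into_f)
  have muU: "\<mu> t \<in> U" if "t \<in> I" for t
    using inU[OF that] by (simp add: \<mu>_def \<psi>_def inv_into_into)
  have opI: "open I" by (simp add: I_def)
  have path: "fdc_path A G Tf I \<mu>"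
    unfolding fdc_path_def
  proof (intro conjI ballI)
    show "is_interval I" by (simp add: I_def is_interval_def)
    show "\<exists>a\<in>I. \<exists>b\<in>I. a < b" using e by (intro bexI[of _ 0] bexI[of _ "e/2"]) (auto simp: I_def)
  next
    fix t assume t: "t \<in> I"
    have vd: "vector_derivative (\<phi> \<circ> \<mu>) (at t within I) = v"
    proof -
      have "((\<lambda>s. p + s *\<^sub>R v) has_vector_derivative v) (at t)"
        by (auto intro!: derivative_eq_intros)
      hence "((\<phi> \<circ> \<mu>) has_vector_derivative v) (at t)"
        by (rule has_vector_derivative_transform_within_open[OF _ opI t]) (simp add: phimu[simplified])
      thus ?thesis using at_within_open[OF t opI] vector_derivative_at by simp
    qed
    have Ft: "F (p + t *\<^sub>R v) < 0" and Ht: "H (p + t *\<^sub>R v) < 0" using inW[OF t] by (auto simp: W_def)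
    have X: "\<mu> ` (I \<inter> {t - 1<..<t + 1}) \<subseteq> U \<and>
        smooth_on (I \<inter> {t - 1<..<t + 1}) (\<phi> \<circ> \<mu>) \<and>
        (let w = vector_derivative (\<phi> \<circ> \<mu>) (at t within I) in
           w \<noteq> 0 \<and> bil (G \<phi> (\<mu> t)) w w \<le> 0 \<and> bil (G \<phi> (\<mu> t)) w (Tf \<phi> (\<mu> t)) < 0)"
    proof (intro conjI)
      show "\<mu> ` (I \<inter> {t - 1<..<t + 1}) \<subseteq> U" using muU by auto
      show "smooth_on (I \<inter> {t - 1<..<t + 1}) (\<phi> \<circ> \<mu>)"
        by (rule smooth_affine[of _ _ p v]) (auto simp: opI phimu[simplified])
      show "let w = vector_derivative (\<phi> \<circ> \<mu>) (at t within I) in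
           w \<noteq> 0 \<and> bil (G \<phi> (\<mu> t)) w w \<le> 0 \<and> bil (G \<phi> (\<mu> t)) w (Tf \<phi> (\<mu> t)) < 0"
        using vd vnz Ft Ht by (simp add: F_def H_def \<mu>_def)
    qed
    show "\<exists>(U, \<phi>)\<in>A. \<exists>e>0. \<mu> ` (I \<inter> {t - e<..<t + e}) \<subseteq> U \<and>
        smooth_on (I \<inter> {t - e<..<t + e}) (\<phi> \<circ> \<mu>) \<and>
        (let v = vector_derivative (\<phi> \<circ> \<mu>) (at t within I) in
           v \<noteq> 0 \<and> bil (G \<phi> (\<mu> t)) v v \<le> 0 \<and> bil (G \<phi> (\<mu> t)) v (Tf \<phi> (\<mu> t)) < 0)"
      apply (rule bexI[of _ "(U,\<phi>)"]) apply (simp only: prod.case) apply (rule exI[of _ 1]) using X UA by simp_all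
  qed
  have "0 \<in> I" "e/2 \<in> I" using e by (auto simp: I_def)
  moreover have "\<mu> 0 \<noteq> \<mu> (e/2)"
  proof
    assume "\<mu> 0 = \<mu> (e/2)"
    hence "(\<phi> \<circ> \<mu>) 0 = (\<phi> \<circ> \<mu>) (e/2)" by simp
    hence "p + 0 *\<^sub>R v = p + (e/2) *\<^sub>R v" using phimu[of 0] phimu[of "e/2"] calculation by simp
    thus False using vnz e by simp
  qed
  ultimately show ?thesis using path opI by blast
qed


lemma not_monoidal_aux:
  fixes A :: "('p::{t2_space, second_countable_topology}, 'n::finite) chart set"
  assumes M: "lorentzian_manifold A G Tf"
    and Ob: "\<And>x. {x} \<in> Ob"
  shows "\<not> (\<exists>I a l r. monoidal_category Ob (cHom A G Tf) cComp (cId A G Tf)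
                         (\<lambda>X Y. X \<inter> Y) (\<lambda>S T. S \<inter> T) I a l r)"
proof
  assume "\<exists>I a l r. monoidal_category Ob (cHom A G Tf) cComp (cId A G Tf)
                         (\<lambda>X Y. X \<inter> Y) (\<lambda>S T. S \<inter> T) I a l r"
  then obtain I0 a0 l0 r0 where mc: "monoidal_category Ob (cHom A G Tf) cComp (cId A G Tf)
                         (\<lambda>X Y. X \<inter> Y) (\<lambda>S T. S \<inter> T) I0 a0 l0 r0" by blast
  have F: "\<forall>X\<in>Ob. \<forall>Y\<in>Ob. cId A G Tf X \<inter> cId A G Tf Y = cId A G Tf (X \<inter> Y)"
    using mc unfolding monoidal_category_def by (elim conjE)
  obtain I \<mu> a b where opI: "open I" and P: "fdc_path A G Tf I \<mu>" and ab: "a \<in> I" "b \<in> I" "\<mu> a \<noteq> \<mu> b"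
    using exists_path[OF M] by blast
  define c where "c = {(K, \<nu>). reparam I \<mu> K \<nu>}"
  have cF: "c \<in> fdc_curves A G Tf" unfolding fdc_curves_def c_def using P by blast
  have "reparam I \<mu> I \<mu>"
    unfolding reparam_def
  proof (intro conjI exI[of _ id])
    show "is_interval I" using P unfolding fdc_path_def by blast
    show "bij_betw id I I" by simp
    show "smooth_on I id" by (rule smooth_affine[of _ _ 0 1]) (simp_all add: opI)
    show "\<forall>s\<in>I. \<exists>d>0. (id has_real_derivative d) (at s within I)"
      by (auto intro!: exI[of _ 1] derivative_eq_intros simp: id_def)
    show "\<forall>s\<in>I. \<mu> s = \<mu> (id s)" by simp
  qed
  hence cin: "(I, \<mu>) \<in> c" unfolding c_def by simp
  have mem: "c \<in> cId A G Tf {\<mu> t}" if "t \<in> I" for t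
    unfolding cId_def curves_through_def using cF cin that
    by (intro CollectI conjI bexI[of _ "(I,\<mu>)"]) auto
  have "c \<notin> cId A G Tf {}" unfolding cId_def curves_through_def by auto
  moreover have "c \<in> cId A G Tf ({\<mu> a} \<inter> {\<mu> b})"
    using F Ob mem[OF ab(1)] mem[OF ab(2)] by blast
  ultimately show False using ab(3) by simp
qed

theorem mainTheorem4:
  fixes A :: "('p::{t2_space, second_countable_topology}, 'n::finite) chart set"
    and G :: "('p \<Rightarrow> real^'n) \<Rightarrow> 'p \<Rightarrow> real^'n^'n"
    and Tf :: "('p \<Rightarrow> real^'n) \<Rightarrow> 'p \<Rightarrow> real^'n"
  assumes "lorentzian_manifold A G Tf"
  shows "\<not> (\<exists>I a l r. monoidal_category (slice_objects A G Tf) (cHom A G Tf) cComp (cId A G Tf)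
                         (\<lambda>X Y. X \<inter> Y) (\<lambda>S T. S \<inter> T) I a l r)
       \<and> \<not> (\<exists>I a l r. monoidal_category UNIV (cHom A G Tf) cComp (cId A G Tf)
                         (\<lambda>X Y. X \<inter> Y) (\<lambda>S T. S \<inter> T) I a l r)"
proof
  have "{x} \<in> slice_objects A G Tf" for x
    unfolding slice_objects_def is_slice_def spacelike_def by simp
  then show "\<not> (\<exists>I a l r. monoidal_category (slice_objects A G Tf) (cHom A G Tf) cComp (cId A G Tf)
                         (\<lambda>X Y. X \<inter> Y) (\<lambda>S T. S \<inter> T) I a l r)"
    by (rule not_monoidal_aux[OF assms])
  show "\<not> (\<exists>I a l r. monoidal_category UNIV (cHom A G Tf) cComp (cId A G Tf)
                         (\<lambda>X Y. X \<inter> Y) (\<lambda>S T. S \<inter> T) I a l r)"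
    by (rule not_monoidal_aux[OF assms]) simp
qed

end
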